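(* Let $(X,d)$ be a reflexive Busemann convex geodesic metric space and let $A,B\subseteq X$ be nonempty, closed and convex, with $A$ bounded. Let $T:A\cup B\to A\cup B$ be a cyclic relatively nonexpansive mapping, and suppose the pair $(A,B)$ has proximal normal structure. Then there exists $(x,y)\in A\times B$ such that $d(x,Tx)=d(y,Ty)=\operatorname{dist}(A,B)$.
   Context: $\operatorname{dist}(A,B)=\inf\{d(x,y):x\in A,y\in B\}$, $\delta(x,A)=\sup\{d(x,y):y\in A\}$, $\delta(A,B)=\sup\{d(x,y):x\in A,y\in B\}$. A geodesic space is one in which any two points are joined by a geodesic segment; a subset is convex if it contains every geodesic segment joining two of its points. $X$ is Busemann convex if for any geodesics $c_1:[0,l_1]\to X$, $c_2:[0,l_2]\to X$, $d(c_1(tl_1),c_2(tl_2))\le (1-t)d(c_1(0),c_2(0))+t\,d(c_1(l_1),c_2(l_2))$ for all $t\in[0,1]$. $X$ is reflexive if every decreasing chain of nonempty closed convex bounded subsets has nonempty intersection. $T$ is relatively nonexpansive if $d(Tx,Ty)\le d(x,y)$ for all $x\in A$, $y\in B$; it is cyclic if $T(A)\subseteq B$ and $T(B)\subseteq A$. A pair $(H_1,H_2)$ is proximal if for every $(a,b)\in H_1\times H_2$ there is $(a',b')\in H_1\times H_2$ with $d(a,b')=d(a',b)=\operatorname{dist}(H_1,H_2)$. A convex pair $(K_1,K_2)$ has proximal normal structure if for every closed bounded convex proximal pair $(H_1,H_2)$ with $H_1\subseteq K_1$, $H_2\subseteq K_2$, $\operatorname{dist}(H_1,H_2)=\operatorname{dist}(K_1,K_2)$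 and $\delta(H_1,H_2)>\operatorname{dist}(H_1,H_2)$, there exists $(x_1,x_2)\in H_1\times H_2$ with $\delta(x_1,H_2)<\delta(H_1,H_2)$ and $\delta(x_2,H_1)<\delta(H_1,H_2)$. *)

theory Defs
  imports "HOL-Analysis.Analysis"
begin

text \<open>The metric space X is the whole type 'a (class metric_space).
  dist(A,B) is the library's setdist (infimum of distances for nonempty sets).\<close>

definition geodesic_path :: "(real \<Rightarrow> 'a::metric_space) \<Rightarrow> real \<Rightarrow> bool" where
  "geodesic_path c l \<longleftrightarrow> 0 \<le> l \<and>
     (\<forall>s\<in>{0..l}. \<forall>t\<in>{0..l}. dist (c s) (c t) = \<bar>s - t\<bar>)"

definition geodesic_joining :: "(real \<Rightarrow> 'a::metric_space) \<Rightarrow> real \<Rightarrow> 'a \<Rightarrow> 'a \<Rightarrow> bool" where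
  "geodesic_joining c l x y \<longleftrightarrow> geodesic_path c l \<and> c 0 = x \<and> c l = y"

definition geodesic_space :: "'a::metric_space itself \<Rightarrow> bool" where
  "geodesic_space (_::'a itself) \<longleftrightarrow>
     (\<forall>x y::'a. \<exists>c l. geodesic_joining c l x y)"

definition geo_convex :: "'a::metric_space set \<Rightarrow> bool" where
  "geo_convex C \<longleftrightarrow>
     (\<forall>x\<in>C. \<forall>y\<in>C. \<forall>c l. geodesic_joining c l x y \<longrightarrow> c ` {0..l} \<subseteq> C)"

definition busemann_convex :: "'a::metric_space itself \<Rightarrow> bool" where
  "busemann_convex (_::'a itself) \<longleftrightarrow>
     (\<forall>(c1::real \<Rightarrow> 'a) l1 (c2::real \<Rightarrow> 'a) l2 t.
        geodesic_path c1 l1 \<longrightarrow> geodesic_path c2 l2 \<longrightarrow> t \<in> {0..1} \<longrightarrow>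
        dist (c1 (t * l1)) (c2 (t * l2))
          \<le> (1 - t) * dist (c1 0) (c2 0) + t * dist (c1 l1) (c2 l2))"

definition reflexive_space :: "'a::metric_space itself \<Rightarrow> bool" where
  "reflexive_space (_::'a itself) \<longleftrightarrow>
     (\<forall>\<F>::'a set set. \<F> \<noteq> {} \<longrightarrow>
        (\<forall>S\<in>\<F>. S \<noteq> {} \<and> closed S \<and> geo_convex S \<and> bounded S) \<longrightarrow>
        (\<forall>S\<in>\<F>. \<forall>S'\<in>\<F>. S \<subseteq> S' \<or> S' \<subseteq> S) \<longrightarrow>
        \<Inter>\<F> \<noteq> {})"

definition delta_pt :: "'a::metric_space \<Rightarrow> 'a set \<Rightarrow> real" where
  "delta_pt x A = (SUP y\<in>A. dist x y)"

definition delta_set :: "'a::metric_space set \<Rightarrow> 'a set \<Rightarrow> real" where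
  "delta_set A B = (SUP p\<in>A \<times> B. dist (fst p) (snd p))"

definition relatively_nonexpansive :: "('a::metric_space \<Rightarrow> 'a) \<Rightarrow> 'a set \<Rightarrow> 'a set \<Rightarrow> bool" where
  "relatively_nonexpansive T A B \<longleftrightarrow> (\<forall>x\<in>A. \<forall>y\<in>B. dist (T x) (T y) \<le> dist x y)"

definition cyclic_map :: "('a \<Rightarrow> 'a) \<Rightarrow> 'a set \<Rightarrow> 'a set \<Rightarrow> bool" where
  "cyclic_map T A B \<longleftrightarrow> T ` A \<subseteq> B \<and> T ` B \<subseteq> A"

definition proximal_pair :: "'a::metric_space set \<Rightarrow> 'a set \<Rightarrow> bool" where
  "proximal_pair H1 H2 \<longleftrightarrow>
     (\<forall>a\<in>H1. \<forall>b\<in>H2. \<exists>a'\<in>H1. \<exists>b'\<in>H2.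
        dist a b' = setdist H1 H2 \<and> dist a' b = setdist H1 H2)"

definition proximal_normal_structure :: "'a::metric_space set \<Rightarrow> 'a set \<Rightarrow> bool" where
  "proximal_normal_structure K1 K2 \<longleftrightarrow>
     (\<forall>H1 H2. H1 \<noteq> {} \<and> H2 \<noteq> {} \<and> closed H1 \<and> closed H2 \<and> bounded H1 \<and> bounded H2 \<and>
        geo_convex H1 \<and> geo_convex H2 \<and> proximal_pair H1 H2 \<and>
        H1 \<subseteq> K1 \<and> H2 \<subseteq> K2 \<and> setdist H1 H2 = setdist K1 K2 \<and>
        delta_set H1 H2 > setdist H1 H2 \<longrightarrow>
        (\<exists>x1\<in>H1. \<exists>x2\<in>H2. delta_pt x1 H2 < delta_set H1 H2 \<and> delta_pt x2 H1 < delta_set H1 H2))"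

end

theory Submission
  imports Defs
begin

lemma gj_len: "geodesic_joining c l x y \<Longrightarrow> dist x y = l"
  unfolding geodesic_joining_def geodesic_path_def
  by (metis abs_of_nonneg atLeastAtMost_iff diff_0 dist_commute abs_minus_cancel order_refl)

lemma gj_in: "geo_convex (C::'a::metric_space set) \<Longrightarrow> x \<in> C \<Longrightarrow> x' \<in> C \<Longrightarrow> geodesic_joining c l x x'
   \<Longrightarrow> (t::real) \<in> {0..1} \<Longrightarrow> c (t*l) \<in> C"
proof -
  assume a: "geo_convex C" "x \<in> C" "x' \<in> C" "geodesic_joining c l x x'" "t \<in> {0..1}"
  have "0 \<le> l" using a(4) unfolding geodesic_joining_def geodesic_path_def by auto
  hence "t*l \<in> {0..l}" using a(5) by (auto simp: mult_left_le_one_le)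
  thus ?thesis using a unfolding geo_convex_def by blast
qed

lemma geo_convexI:
  assumes "\<And>x x' c l (t::real). x\<in>S \<Longrightarrow> x'\<in>S \<Longrightarrow> geodesic_joining c l x x' \<Longrightarrow> t\<in>{0..1} \<Longrightarrow> c (t*l) \<in> S"
  shows "geo_convex S"
  unfolding geo_convex_def
proof (intro ballI allI impI subsetI)
  fix x y c l z assume h: "x \<in> S" "y \<in> S" "geodesic_joining c l x y" "z \<in> c ` {0..l}"
  then obtain s where s: "s \<in> {0..l}" "z = c s" by auto
  show "z \<in> S"
  proof (cases "l = 0")
    case True
    hence "s = 0*l" using s by auto
    thus ?thesis using assms[OF h(1,2,3), of 0] s by auto
  next
    case False
    hence "s = (s/l)*l" by auto
    moreover have "s/l \<in> {0..1}" using s False by auto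
    ultimately show ?thesis using assms[OF h(1,2,3), of "s/l"] s by metis
  qed
qed

lemma geo_convex_Inter: "(\<And>S. S \<in> F \<Longrightarrow> geo_convex S) \<Longrightarrow> geo_convex (\<Inter>F)"
  unfolding geo_convex_def by blast

lemma geo_convex_Int: "geo_convex S \<Longrightarrow> geo_convex S' \<Longrightarrow> geo_convex (S \<inter> S')"
  unfolding geo_convex_def by blast

lemma geo_convex_sing: "geo_convex {p}"
  unfolding geo_convex_def geodesic_joining_def geodesic_path_def
proof (intro ballI allI impI subsetI)
  fix x y c l z assume h: "x \<in> {p}" "y \<in> {p}"
    "(0 \<le> l \<and> (\<forall>s\<in>{0..l}. \<forall>t\<in>{0..l}. dist (c s) (c t) = \<bar>s - t\<bar>)) \<and> c 0 = x \<and> c l = y"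
    "z \<in> c ` {0..l}"
  have "dist (c 0) (c l) = \<bar>0 - l\<bar>" using h(3) by auto
  hence "l = 0" using h by auto
  thus "z \<in> {p}" using h by auto
qed

lemma cvx_le: "(a::real) \<le> r \<Longrightarrow> b \<le> r \<Longrightarrow> t \<in> {0..1} \<Longrightarrow> (1-t)*a + t*b \<le> r"
  by (rule convex_bound_le) auto

lemma bus_pt:
  fixes c :: "real \<Rightarrow> 'a::metric_space"
  assumes bc: "busemann_convex TYPE('a)" and gs: "geodesic_space TYPE('a)"
    and g: "geodesic_joining c l x x'" and t: "t \<in> {0..1}"
  shows "\<exists>q. (\<forall>C. geo_convex C \<longrightarrow> y\<in>C \<longrightarrow> y'\<in>C \<longrightarrow> q\<in>C)
     \<and> dist (c (t*l)) q \<le> (1-t)*dist x y + t*dist x' y'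
     \<and> (\<forall>p. dist (c (t*l)) p \<le> (1-t)*dist x p + t*dist x' p)
     \<and> (\<forall>p. dist q p \<le> (1-t)*dist y p + t*dist y' p)"
proof -
  obtain c2 l2 where g2: "geodesic_joining c2 l2 y y'" using gs unfolding geodesic_space_def by blast
  have gp: "geodesic_path c l" "c 0 = x" "c l = x'" using g unfolding geodesic_joining_def by auto
  have gp2: "geodesic_path c2 l2" "c2 0 = y" "c2 l2 = y'" using g2 unfolding geodesic_joining_def by auto
  have gc: "geodesic_path (\<lambda>_. p) 0" for p :: 'a unfolding geodesic_path_def by auto
  have B: "\<And>(c1::real \<Rightarrow> 'a) l1 (c3::real \<Rightarrow> 'a) l3. geodesic_path c1 l1 \<Longrightarrow> geodesic_path c3 l3 \<Longrightarrow>
        dist (c1 (t * l1)) (c3 (t * l3))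
          \<le> (1 - t) * dist (c1 0) (c3 0) + t * dist (c1 l1) (c3 l3)"
    using bc t unfolding busemann_convex_def by blast
  show ?thesis
  proof (intro exI conjI allI impI)
    fix C assume "geo_convex C" "y \<in> C" "y' \<in> C"
    thus "c2 (t*l2) \<in> C" using gj_in g2 t by blast
  next
    show "dist (c (t*l)) (c2 (t*l2)) \<le> (1-t)*dist x y + t*dist x' y'"
      using B[OF gp(1) gp2(1)] gp gp2 by simp
  next
    fix p show "dist (c (t*l)) p \<le> (1-t)*dist x p + t*dist x' p"
      using B[OF gp(1) gc[of p]] gp by simp
  next
    fix p show "dist (c2 (t*l2)) p \<le> (1-t)*dist y p + t*dist y' p"
      using B[OF gp2(1) gc[of p]] gp2 by simp
  qed
qed

lemma geo_convex_cball:
  assumes bc: "busemann_convex TYPE('a::metric_space)" and gs: "geodesic_space TYPE('a)"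
  shows "geo_convex (cball (p::'a) r)"
proof (rule geo_convexI)
  fix x x' c l and t::real assume h: "x \<in> cball p r" "x' \<in> cball p r" "geodesic_joining c l x x'" "t \<in> {0..1}"
  obtain q where "\<forall>p. dist (c (t*l)) p \<le> (1-t)*dist x p + t*dist x' p"
    using bus_pt[OF bc gs h(3,4), of x x] by blast
  hence "dist (c (t*l)) p \<le> (1-t)*dist x p + t*dist x' p" by blast
  also have "\<dots> \<le> r" using h by (intro cvx_le) (auto simp: dist_commute)
  finally show "c (t*l) \<in> cball p r" by (simp add: dist_commute)
qed

lemma refl_chain:
  fixes S :: "real \<Rightarrow> 'a::metric_space set"
  assumes refl: "reflexive_space TYPE('a)"
    and h: "\<And>e. e > 0 \<Longrightarrow> S e \<noteq> {} \<and> closed (S e) \<and> geo_convex (S e) \<and> bounded (S e)"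
    and m: "\<And>e e'. 0 < e \<Longrightarrow> e \<le> e' \<Longrightarrow> S e \<subseteq> S e'"
  shows "\<exists>x. \<forall>e>0. x \<in> S e"
proof -
  let ?F = "S ` {0<..}"
  have "?F \<noteq> {}" by auto
  moreover have "\<forall>X\<in>?F. X \<noteq> {} \<and> closed X \<and> geo_convex X \<and> bounded X" using h by auto
  moreover have "\<forall>X\<in>?F. \<forall>X'\<in>?F. X \<subseteq> X' \<or> X' \<subseteq> X"
  proof (intro ballI)
    fix X X' assume "X \<in> ?F" "X' \<in> ?F"
    then obtain e e' where "e > 0" "e' > 0" "X = S e" "X' = S e'" by auto
    thus "X \<subseteq> X' \<or> X' \<subseteq> X" using m[of e e'] m[of e' e] by (cases "e \<le> e'") auto
  qed
  ultimately have "\<Inter>?F \<noteq> {}" using refl[unfolded reflexive_space_def, rule_format, of ?F] by blast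
  thus ?thesis by auto
qed

lemma partner:
  fixes F :: "'a::metric_space set"
  assumes refl: "reflexive_space TYPE('a)" and bc: "busemann_convex TYPE('a)"
    and gs: "geodesic_space TYPE('a)"
    and cl: "closed F" and cv: "geo_convex F"
    and ap: "\<And>e. e > 0 \<Longrightarrow> \<exists>y\<in>F. dist x y < R + e"
  shows "\<exists>y\<in>F. dist x y \<le> R"
proof -
  let ?S = "\<lambda>e. F \<inter> cball x (R + e)"
  have "\<exists>y. \<forall>e>0. y \<in> ?S e"
  proof (rule refl_chain[OF refl])
    fix e :: real assume e: "e > 0"
    show "?S e \<noteq> {} \<and> closed (?S e) \<and> geo_convex (?S e) \<and> bounded (?S e)"
      using ap[OF e] cl cv geo_convex_cball[OF bc gs]
      by (auto intro!: geo_convex_Int closed_Int bounded_Int)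
  next
    fix e e' :: real assume "0 < e" "e \<le> e'" thus "?S e \<subseteq> ?S e'" by auto
  qed
  then obtain y where y: "\<And>e. e > 0 \<Longrightarrow> y \<in> ?S e" by blast
  have "y \<in> F" using y[of 1] by auto
  moreover have "dist x y \<le> R"
    by (rule field_le_epsilon) (use y in auto)
  ultimately show ?thesis by blast
qed

lemma Lset_cc:
  fixes K1 K2 :: "'a::metric_space set"
  assumes refl: "reflexive_space TYPE('a)" and bc: "busemann_convex TYPE('a)"
    and gs: "geodesic_space TYPE('a)"
    and c1: "closed K1" and c2: "closed K2" and v1: "geo_convex K1" and v2: "geo_convex K2"
    and hD: "\<And>x y. x\<in>K1 \<Longrightarrow> y\<in>K2 \<Longrightarrow> D \<le> dist x y"
  shows "closed {x\<in>K1. \<exists>y\<in>K2. dist x y = D \<and> (\<forall>k\<in>K2. dist x k \<le> r) \<and> (\<forall>k\<in>K1. dist y k \<le> r)}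
    \<and> geo_convex {x\<in>K1. \<exists>y\<in>K2. dist x y = D \<and> (\<forall>k\<in>K2. dist x k \<le> r) \<and> (\<forall>k\<in>K1. dist y k \<le> r)}"
    (is "closed ?L \<and> geo_convex ?L")
proof
  show "closed ?L"
    unfolding closure_subset_eq[symmetric]
  proof
    fix x assume "x \<in> closure ?L"
    hence ap: "\<And>e. e > 0 \<Longrightarrow> \<exists>z\<in>?L. dist z x < e" using closure_approachable by blast
    have "x \<in> closure K1" using \<open>x \<in> closure ?L\<close> closure_mono[of ?L K1] by blast
    hence xK: "x \<in> K1" using c1 by (simp add: closure_closed)
    have rad: "dist x k \<le> r" if k: "k \<in> K2" for k
    proof (rule field_le_epsilon)
      fix e :: real assume "e > 0"
      then obtain z where z: "z \<in> ?L" "dist z x < e" using ap by blast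
      have "dist x k \<le> dist z x + dist z k" by (rule dist_triangle3)
      also have "dist z k \<le> r" using z k by auto
      finally show "dist x k \<le> r + e" using z by auto
    qed
    let ?F = "K2 \<inter> (\<Inter>k\<in>K1. cball k r)"
    have "\<exists>y\<in>?F. dist x y \<le> D"
    proof (rule partner[OF refl bc gs])
      show "closed ?F" using c2 by (intro closed_Int closed_INT) auto
      show "geo_convex ?F" using v2 geo_convex_cball[OF bc gs]
        by (intro geo_convex_Int geo_convex_Inter) auto
      fix e :: real assume "e > 0"
      then obtain z where z: "z \<in> ?L" "dist z x < e" using ap by blast
      then obtain y where y: "y \<in> K2" "dist z y = D" "\<forall>k\<in>K1. dist y k \<le> r" by auto
      have "y \<in> ?F" using y by (auto simp: dist_commute)
      moreover have "dist x y < D + e"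
        using dist_triangle3[of x y z] y z by (simp add: dist_commute)
      ultimately show "\<exists>y\<in>?F. dist x y < D + e" by blast
    qed
    then obtain y where y: "y \<in> ?F" "dist x y \<le> D" by blast
    have "dist x y = D" using y hD[OF xK, of y] by auto
    moreover have "\<forall>k\<in>K1. dist y k \<le> r" using y by (auto simp: dist_commute)
    ultimately show "x \<in> ?L" using xK rad y by blast
  qed
next
  show "geo_convex ?L"
  proof (rule geo_convexI)
    fix x x' c l and t :: real
    assume h: "x \<in> ?L" "x' \<in> ?L" "geodesic_joining c l x x'" "t \<in> {0..1}"
    obtain y where y: "y \<in> K2" "dist x y = D" "\<forall>k\<in>K2. dist x k \<le> r" "\<forall>k\<in>K1. dist y k \<le> r"
      using h(1) by blast
    obtain y' where y': "y' \<in> K2" "dist x' y' = D" "\<forall>k\<in>K2. dist x' k \<le> r" "\<forall>k\<in>K1. dist y' k \<le> r"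
      using h(2) by blast
    obtain q where q: "\<forall>C. geo_convex C \<longrightarrow> y\<in>C \<longrightarrow> y'\<in>C \<longrightarrow> q\<in>C"
     "dist (c (t*l)) q \<le> (1-t)*dist x y + t*dist x' y'"
     "\<forall>p. dist (c (t*l)) p \<le> (1-t)*dist x p + t*dist x' p"
     "\<forall>p. dist q p \<le> (1-t)*dist y p + t*dist y' p"
      using bus_pt[OF bc gs h(3,4), of y y'] by blast
    have mK: "c (t*l) \<in> K1" using gj_in[OF v1 _ _ h(3,4)] h(1,2) by blast
    have qK: "q \<in> K2" using q(1) v2 y(1) y'(1) by blast
    have "dist (c (t*l)) q \<le> D" using q(2) y(2) y'(2) cvx_le[OF order_refl order_refl h(4), of D] by simp
    hence "dist (c (t*l)) q = D" using hD[OF mK qK] by auto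
    moreover have "\<forall>k\<in>K2. dist (c (t*l)) k \<le> r"
    proof
      fix k assume k: "k \<in> K2"
      have "dist (c (t*l)) k \<le> (1-t)*dist x k + t*dist x' k" using q(3) by blast
      also have "\<dots> \<le> r" using y(3) y'(3) k h(4) by (intro cvx_le) auto
      finally show "dist (c (t*l)) k \<le> r" .
    qed
    moreover have "\<forall>k\<in>K1. dist q k \<le> r"
    proof
      fix k assume k: "k \<in> K1"
      have "dist q k \<le> (1-t)*dist y k + t*dist y' k" using q(4) by blast
      also have "\<dots> \<le> r" using y(4) y'(4) k h(4) by (intro cvx_le) auto
      finally show "dist q k \<le> r" .
    qed
    ultimately show "c (t*l) \<in> ?L" using mK qK by blast
  qed
qed

lemma sd_ex: "setdist S U < R \<Longrightarrow> S \<noteq> {} \<Longrightarrow> U \<noteq> {} \<Longrightarrow> \<exists>x\<in>S. \<exists>y\<in>U. dist x y < R"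
  by (meson le_setdist_iff not_le)

lemma refl_fam:
  fixes S :: "'b \<Rightarrow> 'a::metric_space set"
  assumes refl: "reflexive_space TYPE('a)" and ne: "C \<noteq> {}"
    and h: "\<And>a. a \<in> C \<Longrightarrow> S a \<noteq> {} \<and> closed (S a) \<and> geo_convex (S a) \<and> bounded (S a)"
    and m: "\<And>a b. a \<in> C \<Longrightarrow> b \<in> C \<Longrightarrow> S a \<subseteq> S b \<or> S b \<subseteq> S a"
  shows "\<exists>x. \<forall>a\<in>C. x \<in> S a"
proof -
  let ?F = "S ` C"
  have "?F \<noteq> {}" using ne by auto
  moreover have "\<forall>X\<in>?F. X \<noteq> {} \<and> closed X \<and> geo_convex X \<and> bounded X" using h by auto
  moreover have "\<forall>X\<in>?F. \<forall>X'\<in>?F. X \<subseteq> X' \<or> X' \<subseteq> X" using m by auto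
  ultimately have "\<Inter>?F \<noteq> {}" using refl[unfolded reflexive_space_def, rule_format, of ?F] by blast
  thus ?thesis by auto
qed

locale BP =
  fixes A B :: "'a::metric_space set" and T :: "'a \<Rightarrow> 'a"
  assumes refl: "reflexive_space TYPE('a)" and bc: "busemann_convex TYPE('a)"
    and gs: "geodesic_space TYPE('a)"
    and nA: "A \<noteq> {}" and nB: "B \<noteq> {}" and cA: "closed A" and cB: "closed B"
    and vA: "geo_convex A" and vB: "geo_convex B" and bA: "bounded A"
    and cyc: "cyclic_map T A B" and rne: "relatively_nonexpansive T A B"
    and pns: "proximal_normal_structure A B"
begin

abbreviation "D \<equiv> setdist A B"

lemma D_le: "x \<in> A \<Longrightarrow> y \<in> B \<Longrightarrow> D \<le> dist x y" by (rule setdist_le_dist)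
lemma TA: "x \<in> A \<Longrightarrow> T x \<in> B" using cyc unfolding cyclic_map_def by blast
lemma TB: "y \<in> B \<Longrightarrow> T y \<in> A" using cyc unfolding cyclic_map_def by blast
lemma rn: "x \<in> A \<Longrightarrow> y \<in> B \<Longrightarrow> dist (T x) (T y) \<le> dist x y"
  using rne unfolding relatively_nonexpansive_def by blast

lemma A0: "\<exists>x\<in>A. \<exists>y\<in>B. dist x y = D"
proof -
  let ?C = "\<lambda>e. {x\<in>A. setdist {x} B \<le> D + e}"
  have "\<exists>x. \<forall>e>0. x \<in> ?C e"
  proof (rule refl_chain[OF refl])
    fix e :: real assume e: "e > 0"
    have ne: "?C e \<noteq> {}"
    proof
      assume emp: "?C e = {}"
      have "D + e \<le> setdist A B"
        unfolding le_setdist_iff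
      proof (intro conjI ballI impI)
        fix x y assume x: "x \<in> A" and y: "y \<in> B"
        have "\<not> setdist {x} B \<le> D + e" using emp x by blast
        moreover have "setdist {x} B \<le> dist x y" using y by (intro setdist_le_dist) auto
        ultimately show "D + e \<le> dist x y" by linarith
      next
        assume "A = {} \<or> B = {}" thus "D + e \<le> 0" using nA nB by blast
      qed
      thus False using e by linarith
    qed
    have "closed {x. setdist {x} B \<le> D + e}"
      by (rule closed_Collect_le) (auto intro: continuous_on_setdist continuous_on_const)
    moreover have "?C e = A \<inter> {x. setdist {x} B \<le> D + e}" by auto
    ultimately have cl: "closed (?C e)" using cA by (metis closed_Int)
    have cv: "geo_convex (?C e)"
    proof (rule geo_convexI)
      fix x x' c l and t :: real
      assume h: "x \<in> ?C e" "x' \<in> ?C e" "geodesic_joining c l x x'" "t \<in> {0..1}"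
      have mA: "c (t*l) \<in> A" using gj_in[OF vA _ _ h(3,4)] h(1,2) by blast
      have "setdist {c (t*l)} B \<le> D + e + \<eta>" if \<eta>: "\<eta> > 0" for \<eta>
      proof -
        have "setdist {x} B < D + e + \<eta>" using h(1) \<eta> by auto
        then obtain y where y: "y \<in> B" "dist x y < D + e + \<eta>" using sd_ex[of "{x}" B] nB by auto
        have "setdist {x'} B < D + e + \<eta>" using h(2) \<eta> by auto
        then obtain y' where y': "y' \<in> B" "dist x' y' < D + e + \<eta>" using sd_ex[of "{x'}" B] nB by auto
        obtain q where q: "\<forall>C. geo_convex C \<longrightarrow> y\<in>C \<longrightarrow> y'\<in>C \<longrightarrow> q\<in>C"
          "dist (c (t*l)) q \<le> (1-t)*dist x y + t*dist x' y'"
          using bus_pt[OF bc gs h(3,4), of y y'] by blast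
        have qB: "q \<in> B" using q(1) vB y y' by blast
        have "setdist {c (t*l)} B \<le> dist (c (t*l)) q" using qB by (intro setdist_le_dist) auto
        also have "\<dots> \<le> (1-t)*dist x y + t*dist x' y'" by (rule q(2))
        also have "\<dots> \<le> D + e + \<eta>" using y(2) y'(2) h(4) by (intro cvx_le) auto
        finally show ?thesis .
      qed
      hence "setdist {c (t*l)} B \<le> D + e"
        using field_le_epsilon[of "setdist {c (t*l)} B" "D+e"] by (simp add: add.assoc)
      thus "c (t*l) \<in> ?C e" using mA by auto
    qed
    show "?C e \<noteq> {} \<and> closed (?C e) \<and> geo_convex (?C e) \<and> bounded (?C e)"
      using ne cl cv bounded_subset[OF bA, of "?C e"] by auto
  next
    fix e e' :: real assume "0 < e" "e \<le> e'" thus "?C e \<subseteq> ?C e'" by auto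
  qed
  then obtain x where x: "\<And>e. e > 0 \<Longrightarrow> x \<in> ?C e" by blast
  have xA: "x \<in> A" using x[of 1] by auto
  have "\<exists>y\<in>B. dist x y \<le> D"
  proof (rule partner[OF refl bc gs cB vB])
    fix e :: real assume e: "e > 0"
    have "setdist {x} B \<le> D + e/2" using x[of "e/2"] e by auto
    hence "setdist {x} B < D + e" using e by linarith
    then obtain y where "y\<in>B" "dist x y < D + e" using sd_ex[of "{x}" B] nB by auto
    thus "\<exists>y\<in>B. dist x y < D + e" by blast
  qed
  then obtain y where "y \<in> B" "dist x y \<le> D" by blast
  thus ?thesis using xA D_le[OF xA] by force
qed


definition Sig where "Sig = {(E,F). E \<subseteq> A \<and> F \<subseteq> B \<and> E \<noteq> {} \<and> F \<noteq> {} \<and> closed E \<and> closed F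
   \<and> geo_convex E \<and> geo_convex F \<and> bounded E \<and> bounded F \<and> T ` E \<subseteq> F \<and> T ` F \<subseteq> E
   \<and> (\<exists>x\<in>E. \<exists>y\<in>F. dist x y = D)}"

lemma Sig_ne: "\<exists>p. p \<in> Sig"
proof -
  obtain x0 y0 where x0: "x0\<in>A" "y0\<in>B" "dist x0 y0 = D" using A0 by blast
  obtain e where e: "\<forall>x\<in>A. dist x0 x \<le> e" using bA bounded_any_center by blast
  define R where "R = dist y0 (T y0) + e + dist x0 y0"
  let ?F = "B \<inter> cball y0 R"
  have e0: "0 \<le> e" using e x0(1) by force
  have TAF: "T ` A \<subseteq> ?F"
  proof
    fix z assume "z \<in> T ` A" then obtain x where x: "x\<in>A" "z = T x" by auto
    have 1: "dist y0 (T x) \<le> dist y0 (T y0) + dist (T y0) (T x)" by (rule dist_triangle)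
    have 2: "dist (T y0) (T x) \<le> dist x y0" using rn[OF x(1) x0(2)] by (simp add: dist_commute)
    have 3: "dist x y0 \<le> dist x0 x + dist x0 y0" by (rule dist_triangle3)
    have 4: "dist x0 x \<le> e" using e x by auto
    have "dist y0 (T x) \<le> R" unfolding R_def using 1 2 3 4 by linarith
    thus "z \<in> ?F" using x TA by auto
  qed
  have y0F: "y0 \<in> ?F" using x0 e0 unfolding R_def by auto
  have pr: "\<exists>x\<in>A. \<exists>y\<in>?F. dist x y = D" using x0 y0F by blast
  have "(A, ?F) \<in> Sig" unfolding Sig_def
    using pr nA cA cB vA vB bA TAF y0F x0 TB geo_convex_cball[OF bc gs, of y0 R]
    by (auto intro!: geo_convex_Int closed_Int bounded_Int)
  thus ?thesis by blast
qed

lemma Gcc: assumes "(K1,K2) \<in> Sig"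
  shows "closed {x\<in>K1. \<exists>y\<in>K2. dist x y = D} \<and> geo_convex {x\<in>K1. \<exists>y\<in>K2. dist x y = D}"
proof -
  have K: "K1 \<subseteq> A" "K2 \<subseteq> B" "closed K1" "closed K2" "geo_convex K1" "geo_convex K2" "bounded (K1 \<union> K2)"
    using assms unfolding Sig_def by auto
  obtain \<rho> where \<rho>: "\<forall>x\<in>K1 \<union> K2. \<forall>y\<in>K1 \<union> K2. dist x y \<le> \<rho>"
    using K(7) bounded_two_points by blast
  have eq: "{x\<in>K1. \<exists>y\<in>K2. dist x y = D} =
     {x\<in>K1. \<exists>y\<in>K2. dist x y = D \<and> (\<forall>k\<in>K2. dist x k \<le> \<rho>) \<and> (\<forall>k\<in>K1. dist y k \<le> \<rho>)}"
    using \<rho> by blast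
  show ?thesis unfolding eq
    by (rule Lset_cc[OF refl bc gs K(3-6)]) (use K(1,2) D_le in blast)
qed

lemma minimal: "\<exists>K1 K2. (K1,K2) \<in> Sig \<and> (\<forall>E F. (E,F) \<in> Sig \<longrightarrow> E \<subseteq> K1 \<longrightarrow> F \<subseteq> K2 \<longrightarrow> E = K1 \<and> F = K2)"
proof -
  define r where "r = {(p,q). p \<in> Sig \<and> q \<in> Sig \<and> fst q \<subseteq> fst p \<and> snd q \<subseteq> snd p}"
  have Fr: "Field r = Sig"
  proof
    show "Field r \<subseteq> Sig" unfolding r_def Field_def by auto
    show "Sig \<subseteq> Field r"
    proof
      fix p assume "p \<in> Sig" hence "(p,p) \<in> r" unfolding r_def by auto
      thus "p \<in> Field r" by (rule FieldI1)
    qed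
  qed
  have po: "Partial_order r" unfolding Fr unfolding r_def partial_order_on_def preorder_on_def
      refl_on_def trans_def antisym_def by (auto simp: prod_eq_iff)
  have "\<exists>m\<in>Field r. \<forall>a\<in>Field r. (m, a) \<in> r \<longrightarrow> a = m"
  proof (rule Zorns_po_lemma[OF po])
    fix C assume C: "C \<in> Chains r"
    show "\<exists>u\<in>Field r. \<forall>a\<in>C. (a, u) \<in> r"
    proof (cases "C = {}")
      case True then show ?thesis using Sig_ne Fr by auto
    next
      case False
      have CS: "C \<subseteq> Sig" using C unfolding Chains_def r_def by auto
      have cmp: "\<And>a b. a\<in>C \<Longrightarrow> b\<in>C \<Longrightarrow> (fst a \<subseteq> fst b \<and> snd a \<subseteq> snd b) \<or> (fst b \<subseteq> fst a \<and> snd b \<subseteq> snd a)"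
        using C unfolding Chains_def r_def by blast
      have mem: "\<And>a. a \<in> C \<Longrightarrow> (fst a, snd a) \<in> Sig" using CS by auto
      define E where "E = \<Inter>(fst ` C)"
      define F where "F = \<Inter>(snd ` C)"
      obtain a0 where a0: "a0 \<in> C" using False by auto
      let ?G = "\<lambda>a. {x\<in>fst a. \<exists>y\<in>snd a. dist x y = D}"
      have "\<exists>x. \<forall>a\<in>C. x \<in> ?G a"
      proof (rule refl_fam[OF refl False])
        fix a assume a: "a \<in> C"
        have S: "fst a \<noteq> {}" "bounded (fst a)" "\<exists>x\<in>fst a. \<exists>y\<in>snd a. dist x y = D"
          using mem[OF a] unfolding Sig_def by auto
        show "?G a \<noteq> {} \<and> closed (?G a) \<and> geo_convex (?G a) \<and> bounded (?G a)"
          using Gcc[OF mem[OF a]] S bounded_subset[OF S(2), of "?G a"] by auto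
      next
        fix a b assume "a \<in> C" "b \<in> C"
        thus "?G a \<subseteq> ?G b \<or> ?G b \<subseteq> ?G a" using cmp[of a b] by blast
      qed
      then obtain x where x: "\<And>a. a \<in> C \<Longrightarrow> x \<in> ?G a" by blast
      have "\<exists>y. \<forall>a\<in>C. y \<in> snd a \<inter> cball x D"
      proof (rule refl_fam[OF refl False])
        fix a assume a: "a \<in> C"
        have S: "closed (snd a)" "geo_convex (snd a)"
          using mem[OF a] unfolding Sig_def by auto
        have "snd a \<inter> cball x D \<noteq> {}" using x[OF a] by auto
        thus "snd a \<inter> cball x D \<noteq> {} \<and> closed (snd a \<inter> cball x D) \<and>
           geo_convex (snd a \<inter> cball x D) \<and> bounded (snd a \<inter> cball x D)"
          using S geo_convex_cball[OF bc gs, of x D] by (auto intro!: geo_convex_Int closed_Int)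
      next
        fix a b assume "a \<in> C" "b \<in> C"
        thus "snd a \<inter> cball x D \<subseteq> snd b \<inter> cball x D \<or> snd b \<inter> cball x D \<subseteq> snd a \<inter> cball x D"
          using cmp[of a b] by blast
      qed
      then obtain y where y: "\<And>a. a \<in> C \<Longrightarrow> y \<in> snd a \<inter> cball x D" by blast
      have xE: "x \<in> E" unfolding E_def using x by auto
      have yF: "y \<in> F" unfolding F_def using y by auto
      have S0: "fst a0 \<subseteq> A" "snd a0 \<subseteq> B" "bounded (fst a0)" "bounded (snd a0)"
        using mem[OF a0] unfolding Sig_def by auto
      have "dist x y \<le> D" using y[OF a0] by auto
      moreover have "D \<le> dist x y" using xE yF S0 a0 unfolding E_def F_def by (intro D_le) auto
      ultimately have dxy: "dist x y = D" by auto
      have EF: "(E, F) \<in> Sig"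
      proof -
        have sub: "E \<subseteq> fst a0" "F \<subseteq> snd a0" unfolding E_def F_def using a0 by auto
        have f1: "E \<subseteq> A" "F \<subseteq> B" "bounded E" "bounded F" "E \<noteq> {}" "F \<noteq> {}"
          "\<exists>x\<in>E. \<exists>y\<in>F. dist x y = D"
          using sub S0 bounded_subset xE yF dxy by blast+
        have "closed E" "geo_convex E" unfolding E_def
          using mem unfolding Sig_def by (auto intro!: closed_Inter geo_convex_Inter)
        moreover have "closed F" "geo_convex F" unfolding F_def
          using mem unfolding Sig_def by (auto intro!: closed_Inter geo_convex_Inter)
        moreover have "T ` E \<subseteq> F" unfolding E_def F_def using mem unfolding Sig_def by blast
        moreover have "T ` F \<subseteq> E" unfolding E_def F_def using mem unfolding Sig_def by blast
        ultimately show ?thesis unfolding Sig_def using f1 by simp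
      qed
      show ?thesis
      proof (rule bexI[of _ "(E,F)"])
        show "(E, F) \<in> Field r" using EF Fr by auto
        show "\<forall>a\<in>C. (a, (E, F)) \<in> r" unfolding r_def E_def F_def using CS EF[unfolded E_def F_def] by auto
      qed
    qed
  qed
  then obtain m where m: "m \<in> Sig" "\<forall>a\<in>Sig. (m, a) \<in> r \<longrightarrow> a = m" using Fr by auto
  show ?thesis
  proof (intro exI conjI allI impI)
    show "(fst m, snd m) \<in> Sig" using m by auto
    fix E F assume "(E, F) \<in> Sig" "E \<subseteq> fst m" "F \<subseteq> snd m"
    hence "(E,F) = m" using m unfolding r_def by auto
    thus "E = fst m" "F = snd m" by auto
  qed
qed


lemma tight:
  assumes K: "(K1,K2) \<in> Sig" and mn: "\<forall>E F. (E,F) \<in> Sig \<longrightarrow> E \<subseteq> K1 \<longrightarrow> F \<subseteq> K2 \<longrightarrow> E = K1 \<and> F = K2"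
  shows "\<And>x \<rho>. x \<in> K1 \<Longrightarrow> \<forall>k\<in>K2. dist x k \<le> \<rho> \<Longrightarrow> \<forall>k\<in>K1. dist (T x) k \<le> \<rho>"
    and "\<And>y \<rho>. y \<in> K2 \<Longrightarrow> \<forall>k\<in>K1. dist y k \<le> \<rho> \<Longrightarrow> \<forall>k\<in>K2. dist (T y) k \<le> \<rho>"
proof -
  have KS: "K1 \<subseteq> A" "K2 \<subseteq> B" "K1 \<noteq> {}" "K2 \<noteq> {}" "closed K1" "closed K2"
    "geo_convex K1" "geo_convex K2" "bounded K1" "bounded K2" "T ` K1 \<subseteq> K2" "T ` K2 \<subseteq> K1"
    "\<exists>x\<in>K1. \<exists>y\<in>K2. dist x y = D"
    using K unfolding Sig_def by auto
  define cch where "cch S = \<Inter>{C. S \<subseteq> C \<and> closed C \<and> geo_convex C}" for S :: "'a set"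
  have cch_sub: "\<And>S C. S \<subseteq> C \<Longrightarrow> closed C \<Longrightarrow> geo_convex C \<Longrightarrow> cch S \<subseteq> C"
    unfolding cch_def by blast
  have cch_sup: "\<And>S. S \<subseteq> cch S" unfolding cch_def by blast
  have cch_cl: "\<And>S. closed (cch S)" unfolding cch_def by (rule closed_Inter) auto
  have cch_cv: "\<And>S. geo_convex (cch S)" unfolding cch_def by (rule geo_convex_Inter) auto
  let ?M1 = "cch (T ` K2)" and ?M2 = "cch (T ` K1)"
  have M1K: "?M1 \<subseteq> K1" using cch_sub KS by blast
  have M2K: "?M2 \<subseteq> K2" using cch_sub KS by blast
  have "(?M1, ?M2) \<in> Sig"
  proof -
    obtain x y where xy: "x \<in> K1" "y \<in> K2" "dist x y = D" using KS(13) by blast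
    have "dist (T x) (T y) \<le> D" using rn[of x y] xy KS(1,2) by auto
    moreover have "D \<le> dist (T y) (T x)" using xy KS(1,2) TA TB by (intro D_le) auto
    ultimately have "dist (T y) (T x) = D" by (simp add: dist_commute)
    moreover have "T y \<in> ?M1" using cch_sup[of "T ` K2"] xy(2) by blast
    moreover have "T x \<in> ?M2" using cch_sup[of "T ` K1"] xy(1) by blast
    ultimately have pr: "\<exists>x\<in>?M1. \<exists>y\<in>?M2. dist x y = D" by blast
    have f1: "?M1 \<subseteq> A" using M1K KS(1) by blast
    have f2: "?M2 \<subseteq> B" using M2K KS(2) by blast
    have f3: "?M1 \<noteq> {}" using cch_sup[of "T ` K2"] KS(4) by blast
    have f4: "?M2 \<noteq> {}" using cch_sup[of "T ` K1"] KS(3) by blast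
    have f5: "bounded ?M1" by (rule bounded_subset[OF KS(9) M1K])
    have f6: "bounded ?M2" by (rule bounded_subset[OF KS(10) M2K])
    have f7: "T ` ?M1 \<subseteq> ?M2" using M1K cch_sup[of "T ` K1"] by blast
    have f8: "T ` ?M2 \<subseteq> ?M1" using M2K cch_sup[of "T ` K2"] by blast
    note f = f1 f2 f3 f4 f5 f6 f7 f8
    show ?thesis unfolding Sig_def using f pr cch_cl cch_cv by simp
  qed
  hence eq: "?M1 = K1" "?M2 = K2" using mn M1K M2K by blast+
  show "\<forall>k\<in>K1. dist (T x) k \<le> \<rho>" if x: "x \<in> K1" and r: "\<forall>k\<in>K2. dist x k \<le> \<rho>" for x \<rho>
  proof -
    have "T ` K2 \<subseteq> cball (T x) \<rho>"
    proof
      fix z assume "z \<in> T ` K2" then obtain k where k: "k \<in> K2" "z = T k" by auto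
      have "dist (T x) (T k) \<le> dist x k" using rn x k KS(1,2) by auto
      thus "z \<in> cball (T x) \<rho>" using r k by auto
    qed
    hence "K1 \<subseteq> cball (T x) \<rho>" using cch_sub[OF _ closed_cball geo_convex_cball[OF bc gs]] eq by metis
    thus ?thesis by auto
  qed
  show "\<forall>k\<in>K2. dist (T y) k \<le> \<rho>" if y: "y \<in> K2" and r: "\<forall>k\<in>K1. dist y k \<le> \<rho>" for y \<rho>
  proof -
    have "T ` K1 \<subseteq> cball (T y) \<rho>"
    proof
      fix z assume "z \<in> T ` K1" then obtain k where k: "k \<in> K1" "z = T k" by auto
      have "dist (T k) (T y) \<le> dist k y" using rn y k KS(1,2) by auto
      thus "z \<in> cball (T y) \<rho>" using r k by (auto simp: dist_commute)
    qed
    hence "K2 \<subseteq> cball (T y) \<rho>" using cch_sub[OF _ closed_cball geo_convex_cball[OF bc gs]] eq by metis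
    thus ?thesis by auto
  qed
qed

lemma Lsig:
  assumes K: "(K1,K2) \<in> Sig"
   and t1: "\<And>x \<rho>. x \<in> K1 \<Longrightarrow> \<forall>k\<in>K2. dist x k \<le> \<rho> \<Longrightarrow> \<forall>k\<in>K1. dist (T x) k \<le> \<rho>"
   and t2: "\<And>y \<rho>. y \<in> K2 \<Longrightarrow> \<forall>k\<in>K1. dist y k \<le> \<rho> \<Longrightarrow> \<forall>k\<in>K2. dist (T y) k \<le> \<rho>"
   and w: "x0 \<in> K1" "y0 \<in> K2" "dist x0 y0 = D" "\<forall>k\<in>K2. dist x0 k \<le> r" "\<forall>k\<in>K1. dist y0 k \<le> r"
  shows "({x\<in>K1. \<exists>y\<in>K2. dist x y = D \<and> (\<forall>k\<in>K2. dist x k \<le> r) \<and> (\<forall>k\<in>K1. dist y k \<le> r)},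
          {y\<in>K2. \<exists>x\<in>K1. dist y x = D \<and> (\<forall>k\<in>K1. dist y k \<le> r) \<and> (\<forall>k\<in>K2. dist x k \<le> r)}) \<in> Sig"
    (is "(?L1, ?L2) \<in> Sig")
proof -
  have KS: "K1 \<subseteq> A" "K2 \<subseteq> B" "closed K1" "closed K2"
    "geo_convex K1" "geo_convex K2" "bounded K1" "bounded K2" "T ` K1 \<subseteq> K2" "T ` K2 \<subseteq> K1"
    using K unfolding Sig_def by auto
  have c1: "closed ?L1 \<and> geo_convex ?L1"
    by (rule Lset_cc[OF refl bc gs KS(3-6)]) (use KS(1,2) D_le in blast)
  have c2: "closed ?L2 \<and> geo_convex ?L2"
    by (rule Lset_cc[OF refl bc gs KS(4,3,6,5)]) (metis D_le KS(1,2) dist_commute subsetD)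
  have T1: "T ` ?L1 \<subseteq> ?L2"
  proof
    fix z assume "z \<in> T ` ?L1"
    then obtain x y where x: "x \<in> K1" "z = T x" "y \<in> K2" "dist x y = D" "\<forall>k\<in>K2. dist x k \<le> r"
      "\<forall>k\<in>K1. dist y k \<le> r" by blast
    have "dist (T x) (T y) \<le> D" using rn[of x y] x KS(1,2) by auto
    moreover have "D \<le> dist (T y) (T x)" using x KS(1,2) TA TB by (intro D_le) auto
    ultimately have "dist (T x) (T y) = D" by (simp add: dist_commute)
    moreover have "T x \<in> K2" "T y \<in> K1" using x KS by auto
    moreover have "\<forall>k\<in>K1. dist (T x) k \<le> r" using t1 x by blast
    moreover have "\<forall>k\<in>K2. dist (T y) k \<le> r" using t2 x by blast
    ultimately show "z \<in> ?L2" using x by blast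
  qed
  have T2: "T ` ?L2 \<subseteq> ?L1"
  proof
    fix z assume "z \<in> T ` ?L2"
    then obtain x y where x: "y \<in> K2" "z = T y" "x \<in> K1" "dist y x = D" "\<forall>k\<in>K2. dist x k \<le> r"
      "\<forall>k\<in>K1. dist y k \<le> r" by blast
    have "dist (T x) (T y) \<le> D" using rn[of x y] x KS(1,2) by (auto simp: dist_commute)
    moreover have "D \<le> dist (T y) (T x)" using x KS(1,2) TA TB by (intro D_le) auto
    ultimately have "dist (T y) (T x) = D" by (simp add: dist_commute)
    moreover have "T x \<in> K2" "T y \<in> K1" using x KS by auto
    moreover have "\<forall>k\<in>K1. dist (T x) k \<le> r" using t1 x by blast
    moreover have "\<forall>k\<in>K2. dist (T y) k \<le> r" using t2 x by blast
    ultimately show "z \<in> ?L1" using x by blast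
  qed
  have x0L: "x0 \<in> ?L1" using w by blast
  have y0L: "y0 \<in> ?L2" using w by (auto simp: dist_commute)
  have f: "?L1 \<subseteq> A" "?L2 \<subseteq> B" "?L1 \<noteq> {}" "?L2 \<noteq> {}" "bounded ?L1" "bounded ?L2"
    "\<exists>x\<in>?L1. \<exists>y\<in>?L2. dist x y = D"
    using KS x0L y0L w(3) bounded_subset[OF KS(7), of ?L1] bounded_subset[OF KS(8), of ?L2] by blast+
  show ?thesis unfolding Sig_def using f c1 c2 T1 T2 by simp
qed


theorem main: "\<exists>x\<in>A. \<exists>y\<in>B. dist x (T x) = D \<and> dist y (T y) = D"
proof -
  obtain K1 K2 where K: "(K1,K2) \<in> Sig"
    and mn: "\<forall>E F. (E,F) \<in> Sig \<longrightarrow> E \<subseteq> K1 \<longrightarrow> F \<subseteq> K2 \<longrightarrow> E = K1 \<and> F = K2"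
    using minimal by blast
  note t = tight[OF K mn]
  have KS: "K1 \<subseteq> A" "K2 \<subseteq> B" "K1 \<noteq> {}" "K2 \<noteq> {}" "closed K1" "closed K2"
    "geo_convex K1" "geo_convex K2" "bounded K1" "bounded K2" "T ` K1 \<subseteq> K2" "T ` K2 \<subseteq> K1"
    "\<exists>x\<in>K1. \<exists>y\<in>K2. dist x y = D"
    using K unfolding Sig_def by auto
  obtain x0 y0 where xy0: "x0 \<in> K1" "y0 \<in> K2" "dist x0 y0 = D" using KS(13) by blast
  have "bounded (K1 \<union> K2)" using KS(9,10) by auto
  then obtain R where R: "\<forall>a\<in>K1 \<union> K2. \<forall>b\<in>K1 \<union> K2. dist a b \<le> R" using bounded_two_points by blast
  have bdd: "bdd_above ((\<lambda>p. dist (fst p) (snd p)) ` (K1 \<times> K2))"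
    unfolding bdd_above_def using R by fastforce
  have dle: "dist a b \<le> delta_set K1 K2" if "a \<in> K1" "b \<in> K2" for a b
    unfolding delta_set_def using cSUP_upper[OF _ bdd, of "(a,b)"] that by auto
  have dge: "D \<le> dist a b" if "a \<in> K1" "b \<in> K2" for a b using that KS(1,2) D_le by blast
  have sdK: "setdist K1 K2 = D"
  proof (rule antisym)
    show "setdist K1 K2 \<le> D" using setdist_le_dist[OF xy0(1,2)] xy0(3) by simp
    show "D \<le> setdist K1 K2" unfolding le_setdist_iff using dge KS(3,4) by auto
  qed
  show ?thesis
  proof (cases "delta_set K1 K2 \<le> D")
    case True
    obtain x where x: "x \<in> K1" using KS(3) by blast
    have Tx: "T x \<in> K2" "T (T x) \<in> K1" using x KS(11,12) by auto
    have "dist x (T x) = D" using dle[OF x Tx(1)] dge[OF x Tx(1)] True by linarith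
    moreover have "dist (T x) (T (T x)) = D"
      using dle[OF Tx(2) Tx(1)] dge[OF Tx(2) Tx(1)] True by (simp add: dist_commute)
    ultimately show ?thesis using x Tx KS(1,2) by blast
  next
    case False
    let ?\<delta> = "delta_set K1 K2"
    have LR: "(\<lambda>p. dist (fst p) (snd p)) ` (K1 \<times> K2) \<noteq> {}" using KS(3,4) by auto
    have prox1: "\<forall>a\<in>K1. \<exists>b\<in>K2. dist a b = D" and prox2: "\<forall>b\<in>K2. \<exists>a\<in>K1. dist b a = D"
    proof -
      have w4: "\<forall>k\<in>K2. dist x0 k \<le> R" and w5: "\<forall>k\<in>K1. dist y0 k \<le> R" using R xy0 by auto
      have S: "({x\<in>K1. \<exists>y\<in>K2. dist x y = D \<and> (\<forall>k\<in>K2. dist x k \<le> R) \<and> (\<forall>k\<in>K1. dist y k \<le> R)},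
          {y\<in>K2. \<exists>x\<in>K1. dist y x = D \<and> (\<forall>k\<in>K1. dist y k \<le> R) \<and> (\<forall>k\<in>K2. dist x k \<le> R)}) \<in> Sig"
        by (rule Lsig[OF K t xy0 w4 w5])
      have "{x\<in>K1. \<exists>y\<in>K2. dist x y = D \<and> (\<forall>k\<in>K2. dist x k \<le> R) \<and> (\<forall>k\<in>K1. dist y k \<le> R)} = K1"
        "{y\<in>K2. \<exists>x\<in>K1. dist y x = D \<and> (\<forall>k\<in>K1. dist y k \<le> R) \<and> (\<forall>k\<in>K2. dist x k \<le> R)} = K2"
        using mn S by blast+
      thus "\<forall>a\<in>K1. \<exists>b\<in>K2. dist a b = D" "\<forall>b\<in>K2. \<exists>a\<in>K1. dist b a = D" by blast+
    qed
    have pp: "proximal_pair K1 K2" unfolding proximal_pair_def sdK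
    proof (intro ballI)
      fix a b assume "a \<in> K1" "b \<in> K2"
      then obtain b' a' where "b' \<in> K2" "dist a b' = D" "a' \<in> K1" "dist b a' = D"
        using prox1 prox2 by blast
      thus "\<exists>a'\<in>K1. \<exists>b'\<in>K2. dist a b' = D \<and> dist a' b = D" by (auto simp: dist_commute)
    qed
    have "\<exists>x1\<in>K1. \<exists>x2\<in>K2. delta_pt x1 K2 < ?\<delta> \<and> delta_pt x2 K1 < ?\<delta>"
      using pns[unfolded proximal_normal_structure_def, rule_format, of K1 K2]
        KS pp sdK False by auto
    then obtain x1 x2 where x12: "x1 \<in> K1" "x2 \<in> K2" "delta_pt x1 K2 < ?\<delta>" "delta_pt x2 K1 < ?\<delta>"
      by blast
    have r1: "dist x1 k \<le> delta_pt x1 K2" if "k \<in> K2" for k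
    proof -
      have "bdd_above ((\<lambda>y. dist x1 y) ` K2)" unfolding bdd_above_def using R x12(1) by blast
      thus ?thesis unfolding delta_pt_def using cSUP_upper that by metis
    qed
    have r2: "dist x2 k \<le> delta_pt x2 K1" if "k \<in> K1" for k
    proof -
      have "bdd_above ((\<lambda>y. dist x2 y) ` K1)" unfolding bdd_above_def using R x12(2) by blast
      thus ?thesis unfolding delta_pt_def using cSUP_upper that by metis
    qed
    obtain y1 where y1: "y1 \<in> K2" "dist x1 y1 = D" using prox1 x12(1) by blast
    obtain x2' where x2': "x2' \<in> K1" "dist x2 x2' = D" using prox2 x12(2) by blast
    obtain c l where g: "geodesic_joining c l x1 x2'" using gs unfolding geodesic_space_def by blast
    have th: "(1/2::real) \<in> {0..1}" by auto
    obtain q where q: "\<forall>C. geo_convex C \<longrightarrow> y1\<in>C \<longrightarrow> x2\<in>C \<longrightarrow> q\<in>C"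
     "dist (c ((1/2)*l)) q \<le> (1-1/2)*dist x1 y1 + (1/2)*dist x2' x2"
     "\<forall>p. dist (c ((1/2)*l)) p \<le> (1-1/2)*dist x1 p + (1/2)*dist x2' p"
     "\<forall>p. dist q p \<le> (1-1/2)*dist y1 p + (1/2)*dist x2 p"
      using bus_pt[OF bc gs g th, of y1 x2] by blast
    define m where "m = c ((1/2)*l)"
    have mK: "m \<in> K1" unfolding m_def using gj_in[OF KS(7) x12(1) x2'(1) g th] by simp
    have qK: "q \<in> K2" using q(1) KS(8) y1(1) x12(2) by blast
    have "dist m q \<le> D" using q(2) y1(2) x2'(2) unfolding m_def by (simp add: dist_commute)
    hence dmq: "dist m q = D" using dge[OF mK qK] by auto
    define r where "r = max ((delta_pt x1 K2 + ?\<delta>)/2) ((?\<delta> + delta_pt x2 K1)/2)"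
    have rlt: "r < ?\<delta>" unfolding r_def using x12(3,4) by auto
    have mr: "\<forall>k\<in>K2. dist m k \<le> r"
    proof
      fix k assume k: "k \<in> K2"
      have "dist m k \<le> (1/2)*dist x1 k + (1/2)*dist x2' k" using q(3) unfolding m_def by auto
      moreover have "dist x1 k \<le> delta_pt x1 K2" using r1 k by auto
      moreover have "dist x2' k \<le> ?\<delta>" using dle[OF x2'(1) k] .
      ultimately have "dist m k \<le> (delta_pt x1 K2 + ?\<delta>)/2" by (simp add: field_simps)
      thus "dist m k \<le> r" unfolding r_def by (rule max.coboundedI1)
    qed
    have qr: "\<forall>k\<in>K1. dist q k \<le> r"
    proof
      fix k assume k: "k \<in> K1"
      have "dist q k \<le> (1/2)*dist y1 k + (1/2)*dist x2 k" using q(4) by auto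
      moreover have "dist x2 k \<le> delta_pt x2 K1" using r2 k by auto
      moreover have "dist y1 k \<le> ?\<delta>" using dle[OF k y1(1)] by (simp add: dist_commute)
      ultimately have "dist q k \<le> (?\<delta> + delta_pt x2 K1)/2" by (simp add: field_simps)
      thus "dist q k \<le> r" unfolding r_def by (rule max.coboundedI2)
    qed
    have S: "({x\<in>K1. \<exists>y\<in>K2. dist x y = D \<and> (\<forall>k\<in>K2. dist x k \<le> r) \<and> (\<forall>k\<in>K1. dist y k \<le> r)},
          {y\<in>K2. \<exists>x\<in>K1. dist y x = D \<and> (\<forall>k\<in>K1. dist y k \<le> r) \<and> (\<forall>k\<in>K2. dist x k \<le> r)}) \<in> Sig"
      by (rule Lsig[OF K t mK qK dmq mr qr])
    have "{x\<in>K1. \<exists>y\<in>K2. dist x y = D \<and> (\<forall>k\<in>K2. dist x k \<le> r) \<and> (\<forall>k\<in>K1. dist y k \<le> r)} = K1"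
      using mn S by blast
    hence all: "\<forall>a\<in>K1. \<forall>k\<in>K2. dist a k \<le> r" by blast
    have "?\<delta> \<le> r" unfolding delta_set_def
      by (rule cSUP_least) (use KS(3,4) all in auto)
    with rlt show ?thesis by linarith
  qed
qed

end

theorem mainTheorem2:
  fixes A B :: "'a::metric_space set" and T :: "'a \<Rightarrow> 'a"
  assumes "reflexive_space TYPE('a)" and "busemann_convex TYPE('a)"
    and "geodesic_space TYPE('a)"
    and "A \<noteq> {}" "B \<noteq> {}" "closed A" "closed B" "geo_convex A" "geo_convex B"
    and "bounded A"
    and "cyclic_map T A B" and "relatively_nonexpansive T A B"
    and "proximal_normal_structure A B"
  shows "\<exists>x\<in>A. \<exists>y\<in>B. dist x (T x) = setdist A B \<and> dist y (T y) = setdist A B"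
proof -
  interpret BP A B T using assms by unfold_locales
  show ?thesis by (rule main)
qed

end
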